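(* Assume $p_{i,n}\ge0$ for all $n$ and $i$. Let $\xi_1,\xi_2,\dots$ be independent random variables with $\xi_n\in\{0,1,\dots,m_n\}$ and $\mathbb P\{\xi_n=i\}=p_{i,n}$, and let $\eta=\Delta^{\tilde Q}_{\xi_1\xi_2\dots\xi_n\dots}$. Then the distribution function $F_\eta(x)=\mathbb P\{\eta<x\}$ is $$F_\eta(x)=\begin{cases}0,& x<0,\\ \beta_{i_1(x),1}+\sum_{n=2}^{\infty}\Big[\tilde\beta_{i_n(x),n}\prod_{j=1}^{n-1}\tilde p_{i_j(x),j}\Big],& 0\le x<1,\\ 1,& x\ge1,\end{cases}$$ where $x=\Delta^{-\tilde Q}_{i_1(x)i_2(x)\dots}$.
   Context: Let $(m_n)_{n\ge1}$ be finite nonnegative integers and $\tilde Q=\|q_{i,n}\|$ ($i\in\{0,\dots,m_n\}$) with $q_{i,n}>0$, $\sum_{i}q_{i,n}=1$ for all $n$, and $\prod_n q_{i_n,n}=0$ for every digit sequence $(i_n)$. Put $a_{0,n}=0$, $a_{i,n}=\sum_{l<i}q_{l,n}$; $\Delta^{\tilde Q}_{j_1j_2\dots}=a_{j_1,1}+\sum_{n\ge2}a_{j_n,n}\prod_{l<n}q_{j_l,l}$. The nega-$\tilde Q$-representation $x=\Delta^{-\tilde Q}_{i_1i_2\dots}$ means $x=\Delta^{\tilde Q}_{i_1[m_2-i_2]i_3[m_4-i_4]\dots}$; every $x\in[0,1]$ has one (the formula gives the same value for both representations of a point that has two). Let $P=\|p_{i,n}\|$ have the same shape with $p_{i,n}\in(-1,1)$,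 $\sum_ip_{i,n}=1$, $\prod_n|p_{i_n,n}|=0$ for every digit sequence, $0<\sum_{i<c}p_{i,n}<1$ for $c\in\{1,\dots,m_n\}$. Put $\beta_{0,n}=0$, $\beta_{c,n}=\sum_{i<c}p_{i,n}$; for odd $n$: $\tilde p_{i,n}=p_{i,n}$, $\tilde\beta_{i,n}=\beta_{i,n}$; for even $n$: $\tilde p_{i,n}=p_{m_n-i,n}$, $\tilde\beta_{i,n}=\beta_{m_n-i,n}$. *)

theory Defs
  imports "HOL-Probability.Probability"
begin

text \<open>Indices n of the matrices start at 1; q i n stands for q_{i,n}, m n for m_n.
  Digit sequences are functions d :: nat => nat, only the values d n for n >= 1 matter.\<close>

definition aQ :: "(nat \<Rightarrow> nat \<Rightarrow> real) \<Rightarrow> nat \<Rightarrow> nat \<Rightarrow> real" where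
  "aQ q i n = (\<Sum>l<i. q l n)"

text \<open>Delta^Q_{d_1 d_2 ...} = a_{d_1,1} + sum_{n>=2} a_{d_n,n} prod_{l<n} q_{d_l,l}
  (written as one series over n >= 1, the empty product being 1).\<close>
definition DeltaQ :: "(nat \<Rightarrow> nat \<Rightarrow> real) \<Rightarrow> (nat \<Rightarrow> nat) \<Rightarrow> real" where
  "DeltaQ q d = (\<Sum>n. aQ q (d (Suc n)) (Suc n) * (\<Prod>l\<in>{1..n}. q (d l) l))"

definition negaDigits :: "(nat \<Rightarrow> nat) \<Rightarrow> (nat \<Rightarrow> nat) \<Rightarrow> (nat \<Rightarrow> nat)" where
  "negaDigits m d = (\<lambda>n. if even n then m n - d n else d n)"

definition DeltaNegQ :: "(nat \<Rightarrow> nat) \<Rightarrow> (nat \<Rightarrow> nat \<Rightarrow> real) \<Rightarrow> (nat \<Rightarrow> nat) \<Rightarrow> real" where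
  "DeltaNegQ m q d = DeltaQ q (negaDigits m d)"

definition betaP :: "(nat \<Rightarrow> nat \<Rightarrow> real) \<Rightarrow> nat \<Rightarrow> nat \<Rightarrow> real" where
  "betaP p c n = (\<Sum>i<c. p i n)"

definition tildeP :: "(nat \<Rightarrow> nat) \<Rightarrow> (nat \<Rightarrow> nat \<Rightarrow> real) \<Rightarrow> nat \<Rightarrow> nat \<Rightarrow> real" where
  "tildeP m p i n = (if odd n then p i n else p (m n - i) n)"

definition tildeBeta :: "(nat \<Rightarrow> nat) \<Rightarrow> (nat \<Rightarrow> nat \<Rightarrow> real) \<Rightarrow> nat \<Rightarrow> nat \<Rightarrow> real" where
  "tildeBeta m p i n = (if odd n then betaP p i n else betaP p (m n - i) n)"

definition digitseq :: "(nat \<Rightarrow> nat) \<Rightarrow> (nat \<Rightarrow> nat) \<Rightarrow> bool" where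
  "digitseq m d \<longleftrightarrow> (\<forall>n\<ge>1. d n \<le> m n)"

end

theory Submission
  imports Defs
begin

locale QS =
  fixes m :: "nat \<Rightarrow> nat" and q :: "nat \<Rightarrow> nat \<Rightarrow> real"
  assumes q_pos: "\<And>n i. n \<ge> 1 \<Longrightarrow> i \<le> m n \<Longrightarrow> q i n > 0"
    and q_sum: "\<And>n. n \<ge> 1 \<Longrightarrow> (\<Sum>i\<le>m n. q i n) = 1"
begin

definition T :: "nat \<Rightarrow> (nat \<Rightarrow> nat) \<Rightarrow> nat \<Rightarrow> real" where
  "T k d n = (\<Prod>l\<in>{Suc k..k+n}. q (d l) l)"

definition D :: "nat \<Rightarrow> (nat \<Rightarrow> nat) \<Rightarrow> real" where
  "D k d = (\<Sum>n. aQ q (d (Suc (k+n))) (Suc (k+n)) * T k d n)"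

lemma aQ_nonneg: "n \<ge> 1 \<Longrightarrow> i \<le> m n \<Longrightarrow> aQ q i n \<ge> 0"
  unfolding aQ_def by (intro sum_nonneg) (auto intro: less_imp_le[OF q_pos])

lemma aQ_q: "aQ q i n + q i n = (\<Sum>l<Suc i. q l n)"
  unfolding aQ_def by simp

lemma aQ_le: assumes "n \<ge> 1" "i < i'" "i' \<le> m n" shows "aQ q i n + q i n \<le> aQ q i' n"
  unfolding aQ_q unfolding aQ_def
  using assms by (intro sum_mono2) (auto intro: less_imp_le[OF q_pos])

lemma aQ_m: assumes "n \<ge> 1" shows "aQ q (m n) n + q (m n) n = 1"
  using q_sum[OF assms] unfolding aQ_q by (simp add: lessThan_Suc_atMost)

lemma aQ_le1: assumes "n \<ge> 1" "i \<le> m n" shows "aQ q i n + q i n \<le> 1"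
proof (cases "i = m n")
  case True then show ?thesis using aQ_m[OF assms(1)] by simp
next
  case False
  then have "aQ q i n + q i n \<le> aQ q (m n) n" using assms aQ_le by simp
  also have "\<dots> \<le> 1" using aQ_m[OF assms(1)] q_pos[OF assms(1), of "m n"] by simp
  finally show ?thesis .
qed

lemma aQ_eq1: assumes "n \<ge> 1" "i \<le> m n" "aQ q i n + q i n = 1" shows "i = m n"
proof (rule ccontr)
  assume "i \<noteq> m n"
  then have "aQ q i n + q i n \<le> aQ q (m n) n" using assms aQ_le[OF assms(1), of i "m n"] by simp
  also have "\<dots> < 1" using aQ_m[OF assms(1)] q_pos[OF assms(1), of "m n"] by simp
  finally show False using assms(3) by simp
qed

lemma T_pos: "digitseq m d \<Longrightarrow> T k d n > 0"
  unfolding T_def digitseq_def by (intro prod_pos) (auto intro: q_pos)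

lemma T_0[simp]: "T k d 0 = 1" unfolding T_def by simp

lemma T_Suc: "T k d (Suc n) = T k d n * q (d (Suc (k+n))) (Suc (k+n))"
  unfolding T_def by (simp add: prod.nat_ivl_Suc' mult.commute)

lemma T_shift: "T k d (Suc n) = q (d (Suc k)) (Suc k) * T (Suc k) d n"
  unfolding T_def by (simp add: prod.atLeast_Suc_atMost)

lemma term_bounds:
  assumes "digitseq m d"
  shows "0 \<le> aQ q (d (Suc (k+n))) (Suc (k+n)) * T k d n"
    and "aQ q (d (Suc (k+n))) (Suc (k+n)) * T k d n \<le> T k d n - T k d (Suc n)"
proof -
  have d: "d (Suc (k+n)) \<le> m (Suc (k+n))" using assms unfolding digitseq_def by simp
  have T: "T k d n > 0" using T_pos[OF assms] .
  show "0 \<le> aQ q (d (Suc (k+n))) (Suc (k+n)) * T k d n"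
    using aQ_nonneg[OF _ d] T by simp
  have "aQ q (d (Suc (k+n))) (Suc (k+n)) \<le> 1 - q (d (Suc (k+n))) (Suc (k+n))"
    using aQ_le1[OF _ d] by simp
  then have "aQ q (d (Suc (k+n))) (Suc (k+n)) * T k d n \<le> (1 - q (d (Suc (k+n))) (Suc (k+n))) * T k d n"
    using T by (intro mult_right_mono) auto
  then show "aQ q (d (Suc (k+n))) (Suc (k+n)) * T k d n \<le> T k d n - T k d (Suc n)"
    unfolding T_Suc by (simp add: algebra_simps)
qed

lemma partial_le:
  assumes "digitseq m d"
  shows "(\<Sum>n<N. aQ q (d (Suc (k+n))) (Suc (k+n)) * T k d n) \<le> 1 - T k d N"
proof (induction N)
  case 0 then show ?case by simp
next
  case (Suc N)
  then show ?case using term_bounds(2)[OF assms, of k N] by simp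
qed

lemma D_summable: assumes "digitseq m d"
  shows "summable (\<lambda>n. aQ q (d (Suc (k+n))) (Suc (k+n)) * T k d n)"
proof (rule summableI_nonneg_bounded)
  show "0 \<le> aQ q (d (Suc (k+n))) (Suc (k+n)) * T k d n" for n using term_bounds(1)[OF assms] .
  show "(\<Sum>n<N. aQ q (d (Suc (k+n))) (Suc (k+n)) * T k d n) \<le> 1" for N
    using partial_le[OF assms, where N=N and k=k] T_pos[OF assms, of k N] by simp
qed

lemma D_bounds: assumes "digitseq m d" shows "0 \<le> D k d" "D k d \<le> 1"
proof -
  show "0 \<le> D k d" unfolding D_def
    using D_summable[OF assms] term_bounds(1)[OF assms] by (rule suminf_nonneg)
  show "D k d \<le> 1" unfolding D_def
    using D_summable[OF assms] apply (rule suminf_le_const)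
    using partial_le[OF assms, where k=k] T_pos[OF assms, where k=k] by (smt (verit))
qed

lemma D_rec: assumes "digitseq m d"
  shows "D k d = aQ q (d (Suc k)) (Suc k) + q (d (Suc k)) (Suc k) * D (Suc k) d"
proof -
  let ?f = "\<lambda>n. aQ q (d (Suc (k+n))) (Suc (k+n)) * T k d n"
  have s: "summable ?f" using D_summable[OF assms] .
  have "(\<Sum>n. ?f (Suc n)) = (\<Sum>n. q (d (Suc k)) (Suc k) * (aQ q (d (Suc (Suc k+n))) (Suc (Suc k+n)) * T (Suc k) d n))"
    by (simp add: T_shift algebra_simps)
  also have "\<dots> = q (d (Suc k)) (Suc k) * D (Suc k) d"
    unfolding D_def using D_summable[OF assms, of "Suc k"] by (rule suminf_mult)
  finally have "(\<Sum>n. ?f (Suc n)) = q (d (Suc k)) (Suc k) * D (Suc k) d" .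
  moreover have "(\<Sum>n. ?f (Suc n)) = D k d - ?f 0" unfolding D_def using s by (rule suminf_split_head)
  ultimately show ?thesis by simp
qed

lemma D_cong: "(\<And>j. j > k \<Longrightarrow> d j = e j) \<Longrightarrow> D k d = D k e"
  unfolding D_def T_def by (intro arg_cong[where f=suminf] ext arg_cong2[where f="(*)"] prod.cong) auto

lemma DeltaQ_D: "DeltaQ q d = D 0 d"
  unfolding DeltaQ_def D_def T_def by simp

lemma D_one:
  assumes "digitseq m d" "D k d = 1"
  shows "d (Suc k) = m (Suc k) \<and> D (Suc k) d = 1"
proof -
  have dk: "d (Suc k) \<le> m (Suc k)" using assms(1) unfolding digitseq_def by simp
  have qp: "q (d (Suc k)) (Suc k) > 0" using q_pos[OF _ dk] by simp
  have b: "D (Suc k) d \<le> 1" "0 \<le> D (Suc k) d" using D_bounds[OF assms(1)] by auto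
  have le: "aQ q (d (Suc k)) (Suc k) + q (d (Suc k)) (Suc k) \<le> 1" using aQ_le1[OF _ dk] by simp
  have "q (d (Suc k)) (Suc k) * D (Suc k) d \<le> q (d (Suc k)) (Suc k)"
    using b qp by (simp add: mult_left_le)
  then have eq: "aQ q (d (Suc k)) (Suc k) + q (d (Suc k)) (Suc k) = 1"
    and "q (d (Suc k)) (Suc k) * D (Suc k) d = q (d (Suc k)) (Suc k)"
    using D_rec[OF assms(1), of k] assms(2) le by linarith+
  then have "D (Suc k) d = 1" using qp by simp
  with aQ_eq1[OF _ dk eq] show ?thesis by simp
qed

lemma D_one_all:
  assumes "digitseq m d" "D k d = 1"
  shows "d (Suc (k + j)) = m (Suc (k + j)) \<and> D (Suc (k + j)) d = 1"
proof (induction j)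
  case 0 then show ?case using D_one[OF assms] by simp
next
  case (Suc j) then show ?case using D_one[OF assms(1), of "Suc (k+j)"] by simp
qed

lemma D_compare:
  assumes d: "digitseq m d" and e: "digitseq m e"
  shows "(\<forall>j. k < j \<and> j < k + 1 + t \<longrightarrow> d j = e j) \<Longrightarrow> d (k + 1 + t) < e (k + 1 + t) \<Longrightarrow>
     D k d \<le> D k e \<and> (D k d = D k e \<longrightarrow> (\<forall>j > k + 1 + t. d j = m j))"
proof (induction t arbitrary: k)
  case 0
  let ?n = "Suc k"
  have dn: "d ?n \<le> m ?n" "e ?n \<le> m ?n" using d e unfolding digitseq_def by auto
  have qp: "q (d ?n) ?n > 0" using q_pos[OF _ dn(1)] by simp
  have b: "D ?n d \<le> 1" "0 \<le> D ?n e" using D_bounds[OF d] D_bounds[OF e] by auto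
  have qe: "q (e ?n) ?n > 0" using q_pos[OF _ dn(2)] by simp
  have l1: "aQ q (d ?n) ?n + q (d ?n) ?n \<le> aQ q (e ?n) ?n" using aQ_le[of ?n "d ?n" "e ?n"] 0 dn by simp
  have l2: "q (d ?n) ?n * D ?n d \<le> q (d ?n) ?n" using b qp by (simp add: mult_left_le)
  have l3: "0 \<le> q (e ?n) ?n * D ?n e" using b qe by simp
  have "D k d \<le> D k e" using D_rec[OF d, of k] D_rec[OF e, of k] l1 l2 l3 by linarith
  moreover have "D k d = D k e \<longrightarrow> (\<forall>j > k + 1 + 0. d j = m j)"
  proof
    assume "D k d = D k e"
    then have "q (d ?n) ?n * D ?n d = q (d ?n) ?n"
      using D_rec[OF d, of k] D_rec[OF e, of k] l1 l2 l3 by linarith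
    then have D1: "D ?n d = 1" using qp by simp
    show "\<forall>j > k + 1 + 0. d j = m j"
    proof (intro allI impI)
      fix j assume "j > k + 1 + 0"
      then obtain i where "j = Suc (?n + i)" by (metis add.right_neutral add_Suc_right less_iff_Suc_add Suc_eq_plus1)
      then show "d j = m j" using D_one_all[OF d D1, of i] by simp
    qed
  qed
  ultimately show ?case by simp
next
  case (Suc t)
  let ?n = "Suc k"
  have eqn: "d ?n = e ?n" using Suc.prems(1) by simp
  have IH: "D ?n d \<le> D ?n e \<and> (D ?n d = D ?n e \<longrightarrow> (\<forall>j > ?n + 1 + t. d j = m j))"
    using Suc.IH[of ?n] Suc.prems by simp
  have dn: "d ?n \<le> m ?n" using d unfolding digitseq_def by auto
  have qp: "q (d ?n) ?n > 0" using q_pos[OF _ dn] by simp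
  have "D k d \<le> D k e" using D_rec[OF d, of k] D_rec[OF e, of k] eqn IH qp
    by (simp add: mult_left_mono)
  moreover have "D k d = D k e \<longrightarrow> (\<forall>j > k + 1 + Suc t. d j = m j)"
    using D_rec[OF d, of k] D_rec[OF e, of k] eqn IH qp by simp
  ultimately show ?case by simp
qed

end

locale PS = QS m q + prob_space M
  for m :: "nat \<Rightarrow> nat" and q :: "nat \<Rightarrow> nat \<Rightarrow> real" and M :: "'a measure" +
  fixes p :: "nat \<Rightarrow> nat \<Rightarrow> real" and \<xi> :: "nat \<Rightarrow> 'a \<Rightarrow> nat"
  assumes p_prod: "\<And>d. digitseq m d \<Longrightarrow> (\<lambda>N. \<Prod>n\<in>{1..N}. \<bar>p (d n) n\<bar>) \<longlonglongrightarrow> 0"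
    and p_nonneg: "\<And>n i. n \<ge> 1 \<Longrightarrow> i \<le> m n \<Longrightarrow> p i n \<ge> 0"
    and indep: "indep_vars (\<lambda>_. count_space UNIV) \<xi> {1..}"
    and xi_range: "\<And>n \<omega>. n \<ge> 1 \<Longrightarrow> \<omega> \<in> space M \<Longrightarrow> \<xi> n \<omega> \<le> m n"
    and xi_distr: "\<And>n i. n \<ge> 1 \<Longrightarrow> i \<le> m n \<Longrightarrow>
                       measure M {\<omega> \<in> space M. \<xi> n \<omega> = i} = p i n"
begin

lemma xi_meas[measurable]: "\<xi> (Suc j) \<in> measurable M (count_space UNIV)"
  using indep unfolding indep_vars_def2 by auto

lemma indsets: "indep_sets (\<lambda>i. {\<xi> i -` A \<inter> space M | A. A \<in> sets (count_space UNIV)}) {1..}"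
  using indep unfolding indep_vars_def2 by auto

definition cyl :: "nat \<Rightarrow> (nat \<Rightarrow> nat) \<Rightarrow> 'a set" where
  "cyl N e = {\<omega>\<in>space M. \<forall>j<N. \<xi> (Suc j) \<omega> = e (Suc j)}"

lemma cyl_sets[measurable]: "cyl N e \<in> sets M"
  unfolding cyl_def by measurable

lemma cyl_measure:
  assumes e: "digitseq m e"
  shows "measure M (cyl N e) = (\<Prod>j<N. p (e (Suc j)) (Suc j))"
proof (cases "N = 0")
  case True
  then show ?thesis unfolding cyl_def by (simp add: prob_space)
next
  case False
  let ?A = "\<lambda>j. \<xi> j -` {e j} \<inter> space M"
  have eq: "cyl N e = (\<Inter>j\<in>{1..N}. ?A j)"
    unfolding cyl_def using False
    by (auto simp: less_Suc_eq_le) (metis Suc_le_mono Suc_pred' atLeastAtMost_iff le_refl less_Suc_eq_le not_gr0 not_less_eq_eq)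
  let ?F = "\<lambda>i. {\<xi> i -` A \<inter> space M | A. A \<in> sets (count_space (UNIV::nat set))}"
  have H: "\<forall>A\<in>Pi {1..N} ?F. prob (\<Inter>j\<in>{1..N}. A j) = (\<Prod>j\<in>{1..N}. prob (A j))"
    using indsets False unfolding indep_sets_def by auto
  have "?A \<in> Pi {1..N} ?F" by auto
  with H have "prob (\<Inter>j\<in>{1..N}. ?A j) = (\<Prod>j\<in>{1..N}. prob (?A j))" by blast
  also have "\<dots> = (\<Prod>j\<in>{1..N}. p (e j) j)"
  proof (rule prod.cong)
    fix j assume j: "j \<in> {1..N}"
    have "?A j = {\<omega> \<in> space M. \<xi> j \<omega> = e j}" by auto
    then show "prob (?A j) = p (e j) j" using xi_distr[of j "e j"] j e unfolding digitseq_def by auto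
  qed simp
  also have "\<dots> = (\<Prod>j<N. p (e (Suc j)) (Suc j))" by (simp add: prod.atLeast1_atMost_eq)
  finally show ?thesis using eq by simp
qed

definition C :: "(nat \<Rightarrow> nat) \<Rightarrow> 'a set" where
  "C e = {\<omega>\<in>space M. \<forall>j. \<xi> (Suc j) \<omega> = e (Suc j)}"

lemma C_sets[measurable]: "C e \<in> sets M"
  unfolding C_def by measurable

lemma C_null: assumes e: "digitseq m e" shows "C e \<in> null_sets M"
proof -
  have le: "prob (C e) \<le> (\<Prod>j<N. p (e (Suc j)) (Suc j))" for N
    unfolding cyl_measure[OF e, symmetric]
    by (intro finite_measure_mono) (auto simp: C_def cyl_def)
  have "(\<lambda>N. \<Prod>n\<in>{1..N}. \<bar>p (e n) n\<bar>) \<longlonglongrightarrow> 0" using p_prod[OF e] .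
  moreover have "(\<Prod>n\<in>{1..N}. \<bar>p (e n) n\<bar>) = (\<Prod>j<N. p (e (Suc j)) (Suc j))" for N
    using p_nonneg e unfolding digitseq_def by (simp add: prod.atLeast1_atMost_eq)
  ultimately have "(\<lambda>N. \<Prod>j<N. p (e (Suc j)) (Suc j)) \<longlonglongrightarrow> 0" by simp
  then have "prob (C e) \<le> 0" using le by (intro LIMSEQ_le_const) auto
  then have "prob (C e) = 0" using measure_nonneg[of M "C e"] by linarith
  then show ?thesis using C_sets by (simp add: emeasure_eq_measure null_sets_def)
qed

definition eta :: "'a \<Rightarrow> real" where
  "eta \<omega> = DeltaQ q (\<lambda>n. \<xi> n \<omega>)"

lemma eta_meas[measurable]: "eta \<in> borel_measurable M"
proof -
  have "(\<lambda>\<omega>. aQ q (\<xi> (Suc n) \<omega>) (Suc n) * (\<Prod>l\<in>{1..n}. q (\<xi> l \<omega>) l)) \<in> borel_measurable M" for n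
  proof -
    have m: "\<xi> l \<in> measurable M (count_space UNIV)" if "l \<in> {1..n}" for l
    proof -
      have "l = Suc (l - 1)" using that by simp
      then show ?thesis using xi_meas[of "l - 1"] by metis
    qed
    have "(\<lambda>\<omega>. (\<Prod>l\<in>{1..n}. q (\<xi> l \<omega>) l)) \<in> borel_measurable M"
      by (intro borel_measurable_prod measurable_compose[OF m borel_measurable_count_space])
    moreover have "(\<lambda>\<omega>. aQ q (\<xi> (Suc n) \<omega>) (Suc n)) \<in> borel_measurable M" by measurable
    ultimately show ?thesis by (intro borel_measurable_times)
  qed
  then show ?thesis unfolding eta_def DeltaQ_def by measurable
qed

lemma digits: "\<omega> \<in> space M \<Longrightarrow> digitseq m (\<lambda>n. \<xi> n \<omega>)"
  unfolding digitseq_def using xi_range by auto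

end

context PS begin

lemma eta_D: "eta \<omega> = D 0 (\<lambda>n. \<xi> n \<omega>)"
  unfolding eta_def DeltaQ_D ..

lemma F_neg: assumes "x < 0" shows "prob {\<omega>\<in>space M. eta \<omega> < x} = 0"
proof -
  have "0 \<le> D 0 (\<lambda>n. \<xi> n \<omega>)" if "\<omega> \<in> space M" for \<omega>
    using that by (rule D_bounds(1)[OF digits])
  then have e: "{\<omega>\<in>space M. eta \<omega> < x} = {}"
    using assms unfolding eta_D by fastforce
  show ?thesis unfolding e by simp
qed

lemma F_ge1: assumes "1 \<le> x" shows "prob {\<omega>\<in>space M. eta \<omega> < x} = 1"
proof -
  let ?S = "{\<omega>\<in>space M. eta \<omega> < x}"
  have S: "?S \<in> events" by measurable
  have dm: "digitseq m m" unfolding digitseq_def by simp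
  have sub: "space M - ?S \<subseteq> C m"
  proof
    fix \<omega> assume w: "\<omega> \<in> space M - ?S"
    then have "D 0 (\<lambda>n. \<xi> n \<omega>) = 1" using D_bounds(2)[OF digits, of \<omega> 0] assms unfolding eta_D by auto
    then show "\<omega> \<in> C m" using D_one_all[OF digits, of \<omega> 0] w unfolding C_def by auto
  qed
  then have "space M - ?S \<in> null_sets M" using null_sets_subset[OF C_null[OF dm] _ sub] S by blast
  then have "prob (space M - ?S) = 0" by (simp add: measure_def null_setsD1)
  then show ?thesis using prob_compl[OF S] by simp
qed

definition AA :: "(nat \<Rightarrow> nat) \<Rightarrow> nat \<Rightarrow> 'a set" where
  "AA c k = {\<omega>\<in>space M. (\<forall>j<k. \<xi> (Suc j) \<omega> = c (Suc j)) \<and> \<xi> (Suc k) \<omega> < c (Suc k)}"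

lemma AA_sets[measurable]: "AA c k \<in> sets M"
  unfolding AA_def by measurable

lemma AA_measure: assumes c: "digitseq m c"
  shows "prob (AA c k) = betaP p (c (Suc k)) (Suc k) * (\<Prod>j<k. p (c (Suc j)) (Suc j))"
proof -
  have eq: "AA c k = (\<Union>i<c (Suc k). cyl (Suc k) (c(Suc k := i)))"
    unfolding AA_def cyl_def by (auto simp: less_Suc_eq)
  have dis: "disjoint_family_on (\<lambda>i. cyl (Suc k) (c(Suc k := i))) {..<c (Suc k)}"
    unfolding disjoint_family_on_def cyl_def by auto
  have "prob (AA c k) = (\<Sum>i<c (Suc k). prob (cyl (Suc k) (c(Suc k := i))))"
    unfolding eq by (intro measure_finite_Union dis) auto
  also have "\<dots> = (\<Sum>i<c (Suc k). p i (Suc k) * (\<Prod>j<k. p (c (Suc j)) (Suc j)))"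
  proof (rule sum.cong)
    fix i assume i: "i \<in> {..<c (Suc k)}"
    have "c (Suc k) \<le> m (Suc k)" using c unfolding digitseq_def by simp
    then have "i \<le> m (Suc k)" using i by simp
    then have ds: "digitseq m (c(Suc k := i))" using c unfolding digitseq_def by auto
    show "prob (cyl (Suc k) (c(Suc k := i))) = p i (Suc k) * (\<Prod>j<k. p (c (Suc j)) (Suc j))"
      unfolding cyl_measure[OF ds] by (simp add: mult.commute)
  qed simp
  also have "\<dots> = betaP p (c (Suc k)) (Suc k) * (\<Prod>j<k. p (c (Suc j)) (Suc j))"
    unfolding betaP_def by (simp add: sum_distrib_right)
  finally show ?thesis .
qed

lemma AA_disj: "disjoint_family (AA c)"
  unfolding disjoint_family_on_def
proof (intro ballI impI)
  have *: "AA c k \<inter> AA c k' = {}" if "k < k'" for k k'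
  proof -
    { fix \<omega> assume a: "\<omega> \<in> AA c k" "\<omega> \<in> AA c k'"
      then have "\<xi> (Suc k) \<omega> = c (Suc k)" using that unfolding AA_def by blast
      then have False using a(1) unfolding AA_def by simp }
    then show ?thesis by blast
  qed
  fix k k' :: nat assume "k \<noteq> k'"
  then show "AA c k \<inter> AA c k' = {}" using *[of k k'] *[of k' k] by (cases "k < k'") auto
qed

lemma F_mid:
  assumes c: "digitseq m c"
  shows "(\<lambda>k. betaP p (c (Suc k)) (Suc k) * (\<Prod>j<k. p (c (Suc j)) (Suc j))) sums
           prob {\<omega>\<in>space M. eta \<omega> < D 0 c}"
proof -
  let ?S = "{\<omega>\<in>space M. eta \<omega> < D 0 c}"
  let ?U = "\<Union>k. AA c k"
  let ?e = "\<lambda>k i j. if j \<le> k then c j else if j = Suc k then min i (m (Suc k)) else m j"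
  let ?Z = "\<Union>k. \<Union>i. C (?e k i)"
  have S: "?S \<in> events" by measurable
  have U: "?U \<in> events" by measurable
  have SU: "?S \<subseteq> ?U"
  proof
    fix \<omega> assume w: "\<omega> \<in> ?S"
    let ?x = "\<lambda>n. \<xi> n \<omega>"
    have dx: "digitseq m ?x" using w digits by auto
    have ex: "\<exists>j. j \<ge> 1 \<and> \<xi> j \<omega> \<noteq> c j"
    proof (rule ccontr)
      assume "\<not> ?thesis"
      then have "D 0 ?x = D 0 c" by (intro D_cong) auto
      then show False using w unfolding eta_D by simp
    qed
    define n where "n = (LEAST j. j \<ge> 1 \<and> \<xi> j \<omega> \<noteq> c j)"
    have n: "n \<ge> 1" "\<xi> n \<omega> \<noteq> c n" using LeastI_ex[OF ex] unfolding n_def by auto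
    have before: "\<xi> j \<omega> = c j" if "j \<ge> 1" "j < n" for j
      using not_less_Least[of j "\<lambda>j. j \<ge> 1 \<and> \<xi> j \<omega> \<noteq> c j"] that unfolding n_def by auto
    obtain k where k: "n = Suc k" using n(1) by (cases n) auto
    show "\<omega> \<in> ?U"
    proof (cases "\<xi> n \<omega> < c n")
      case True
      then have "\<omega> \<in> AA c k" using w before k unfolding AA_def by auto
      then show ?thesis by blast
    next
      case False
      then have "c (0 + 1 + k) < ?x (0 + 1 + k)" using n k by simp
      moreover have "\<forall>j. 0 < j \<and> j < 0 + 1 + k \<longrightarrow> c j = ?x j" using before k by simp
      ultimately have "D 0 c \<le> D 0 ?x" using D_compare[OF c dx] by blast
      then show ?thesis using w unfolding eta_D by simp
    qed
  qed
  have UZ: "?U - ?S \<subseteq> ?Z"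
  proof
    fix \<omega> assume w: "\<omega> \<in> ?U - ?S"
    then obtain k where wk: "\<omega> \<in> AA c k" by blast
    let ?x = "\<lambda>n. \<xi> n \<omega>"
    have ws: "\<omega> \<in> space M" using wk unfolding AA_def by auto
    have dx: "digitseq m ?x" using ws digits by auto
    have "?x (0 + 1 + k) < c (0 + 1 + k)" using wk unfolding AA_def by simp
    moreover have "\<forall>j. 0 < j \<and> j < 0 + 1 + k \<longrightarrow> ?x j = c j"
    proof (intro allI impI)
      fix j assume j: "0 < j \<and> j < 0 + 1 + k"
      then obtain j' where "j = Suc j'" "j' < k" by (cases j) auto
      then show "?x j = c j" using wk unfolding AA_def by simp
    qed
    ultimately have cmp: "D 0 ?x \<le> D 0 c \<and> (D 0 ?x = D 0 c \<longrightarrow> (\<forall>j > 0 + 1 + k. ?x j = m j))"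
      using D_compare[OF dx c] by blast
    have "D 0 ?x = D 0 c" using cmp w ws unfolding eta_D by auto
    then have tail: "\<forall>j > Suc k. \<xi> j \<omega> = m j" using cmp by simp
    have "\<omega> \<in> C (?e k (\<xi> (Suc k) \<omega>))"
      unfolding C_def
    proof (intro CollectI conjI allI ws)
      fix j
      show "\<xi> (Suc j) \<omega> = ?e k (\<xi> (Suc k) \<omega>) (Suc j)"
      proof (cases "Suc j \<le> k")
        case True then show ?thesis using wk unfolding AA_def by auto
      next
        case False
        then show ?thesis using tail xi_range[OF _ ws, of "Suc k"] by (auto simp: min_def)
      qed
    qed
    then show "\<omega> \<in> ?Z" by blast
  qed
  have Zn: "?Z \<in> null_sets M"
  proof (intro null_sets_UN C_null)
    fix k i show "digitseq m (?e k i)" using c unfolding digitseq_def by auto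
  qed
  have "?U - ?S \<in> null_sets M" using null_sets_subset[OF Zn _ UZ] U S by blast
  then have "prob (?U - ?S) = 0" by (simp add: measure_def null_setsD1)
  then have eqUS: "prob ?U = prob ?S" using finite_measure_Diff[OF U S SU] by simp
  have "(\<lambda>k. prob (AA c k)) sums prob ?U"
    by (intro measure_UNION AA_disj) auto
  then show ?thesis unfolding eqUS AA_measure[OF c] .
qed

end

theorem mainTheorem10:
  fixes m :: "nat \<Rightarrow> nat" and q p :: "nat \<Rightarrow> nat \<Rightarrow> real"
    and M :: "'a measure" and \<xi> :: "nat \<Rightarrow> 'a \<Rightarrow> nat"
  assumes q_pos: "\<And>n i. n \<ge> 1 \<Longrightarrow> i \<le> m n \<Longrightarrow> q i n > 0"
    and q_sum: "\<And>n. n \<ge> 1 \<Longrightarrow> (\<Sum>i\<le>m n. q i n) = 1"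
    and q_prod: "\<And>d. digitseq m d \<Longrightarrow> (\<lambda>N. \<Prod>n\<in>{1..N}. q (d n) n) \<longlonglongrightarrow> 0"
    and p_range: "\<And>n i. n \<ge> 1 \<Longrightarrow> i \<le> m n \<Longrightarrow> -1 < p i n \<and> p i n < 1"
    and p_sum: "\<And>n. n \<ge> 1 \<Longrightarrow> (\<Sum>i\<le>m n. p i n) = 1"
    and p_prod: "\<And>d. digitseq m d \<Longrightarrow> (\<lambda>N. \<Prod>n\<in>{1..N}. \<bar>p (d n) n\<bar>) \<longlonglongrightarrow> 0"
    and p_partial: "\<And>n c. n \<ge> 1 \<Longrightarrow> 1 \<le> c \<Longrightarrow> c \<le> m n \<Longrightarrow>
                       0 < (\<Sum>i<c. p i n) \<and> (\<Sum>i<c. p i n) < 1"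
    and p_nonneg: "\<And>n i. n \<ge> 1 \<Longrightarrow> i \<le> m n \<Longrightarrow> p i n \<ge> 0"
    and M: "prob_space M"
    and indep: "prob_space.indep_vars M (\<lambda>_. count_space UNIV) \<xi> {1..}"
    and xi_range: "\<And>n \<omega>. n \<ge> 1 \<Longrightarrow> \<omega> \<in> space M \<Longrightarrow> \<xi> n \<omega> \<le> m n"
    and xi_distr: "\<And>n i. n \<ge> 1 \<Longrightarrow> i \<le> m n \<Longrightarrow>
                       measure M {\<omega> \<in> space M. \<xi> n \<omega> = i} = p i n"
  shows "let \<eta> = (\<lambda>\<omega>. DeltaQ q (\<lambda>n. \<xi> n \<omega>));
             F = (\<lambda>x::real. measure M {\<omega> \<in> space M. \<eta> \<omega> < x})
         in (\<forall>x<0. F x = 0)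
          \<and> (\<forall>x\<ge>1. F x = 1)
          \<and> (\<forall>x d. 0 \<le> x \<and> x < 1 \<and> digitseq m d \<and> x = DeltaNegQ m q d \<longrightarrow>
               F x = betaP p (d 1) 1
                     + (\<Sum>k. tildeBeta m p (d (k + 2)) (k + 2)
                              * (\<Prod>j\<in>{1..k + 1}. tildeP m p (d j) j)))"
proof -
  interpret PS m q M p \<xi>
    apply (rule PS.intro)
    subgoal by (rule QS.intro) (fact q_pos, fact q_sum)
    subgoal by (rule M)
    subgoal by (rule PS_axioms.intro) (fact p_prod | fact p_nonneg | fact indep | fact xi_range | fact xi_distr)+
    done
  have eta: "(\<lambda>\<omega>. DeltaQ q (\<lambda>n. \<xi> n \<omega>)) = eta" unfolding eta_def ..
  have part3: "prob {\<omega>\<in>space M. eta \<omega> < x} = betaP p (d 1) 1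
                     + (\<Sum>k. tildeBeta m p (d (k + 2)) (k + 2)
                              * (\<Prod>j\<in>{1..k + 1}. tildeP m p (d j) j))"
    if x: "x = DeltaNegQ m q d" and d: "digitseq m d" for x d
  proof -
    define c where "c = negaDigits m d"
    have c: "digitseq m c" using d unfolding c_def digitseq_def negaDigits_def by auto
    have xc: "x = D 0 c" using x unfolding DeltaNegQ_def c_def DeltaQ_D .
    let ?g = "\<lambda>k. betaP p (c (Suc k)) (Suc k) * (\<Prod>j<k. p (c (Suc j)) (Suc j))"
    have sm: "?g sums prob {\<omega>\<in>space M. eta \<omega> < x}" using F_mid[OF c] xc by simp
    have tb: "tildeBeta m p (d n) n = betaP p (c n) n" for n
      unfolding tildeBeta_def c_def negaDigits_def by auto
    have tp: "tildeP m p (d n) n = p (c n) n" for n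
      unfolding tildeP_def c_def negaDigits_def by auto
    have "(\<Sum>k. tildeBeta m p (d (k + 2)) (k + 2) * (\<Prod>j\<in>{1..k + 1}. tildeP m p (d j) j))
          = (\<Sum>k. ?g (Suc k))"
      unfolding tb tp by (simp add: prod.atLeast1_atMost_eq)
    also have "\<dots> = suminf ?g - ?g 0" using sm by (intro suminf_split_head) (auto simp: sums_iff)
    also have "\<dots> = prob {\<omega>\<in>space M. eta \<omega> < x} - betaP p (d 1) 1"
      using sm by (simp add: sums_iff c_def negaDigits_def)
    finally show ?thesis by simp
  qed
  show ?thesis unfolding Let_def eta
  proof (intro conjI allI impI)
    fix x :: real assume "x < 0" then show "prob {\<omega>\<in>space M. eta \<omega> < x} = 0" by (rule F_neg)
  next
    fix x :: real assume "1 \<le> x" then show "prob {\<omega>\<in>space M. eta \<omega> < x} = 1" by (rule F_ge1)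
  next
    fix x :: real and d assume h: "0 \<le> x \<and> x < 1 \<and> digitseq m d \<and> x = DeltaNegQ m q d"
    then show "prob {\<omega>\<in>space M. eta \<omega> < x} = betaP p (d 1) 1
                     + (\<Sum>k. tildeBeta m p (d (k + 2)) (k + 2)
                              * (\<Prod>j\<in>{1..k + 1}. tildeP m p (d j) j))"
      using part3[of x d] by blast
  qed
qed

end
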